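(* Let $g:[-1,1]\to\mathbb{R}$ be the constant function $g(x)=1/2$. For every univariate ReLU neural network $f:\mathbb{R}\to\mathbb{R}$ of any depth and any layer widths whose biases are all zero, one has $$\int_{-1}^{1}\big(g(x)-f(x)\big)^2\,dx\;\ge\;\frac18 .$$ Consequently, for any $\epsilon<1/8$ there is no such bias-free ReLU network approximating $g$ to squared-error (MSE integral) at most $\epsilon$ on $[-1,1]$.
   Context: A bias-free ReLU network computes $x\mapsto \bm{W}^{(L)}\phi(\bm{W}^{(L-1)}\cdots\phi(\bm{W}^{(1)}x))$ (with the output layer either linear or also followed by $\phi$), where $\phi(x)=\max(x,0)$ is applied componentwise and the $\bm{W}^{(l)}$ are real matrices of compatible sizes. *)

theory Defs
  imports "HOL-Analysis.Analysis"
begin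

definition relu :: "real \<Rightarrow> real" where
  "relu x = max x 0"

text \<open>Matrices are lists of rows (real lists); vectors are real lists.\<close>
definition mat_vec :: "real list list \<Rightarrow> real list \<Rightarrow> real list" where
  "mat_vec W v = map (\<lambda>row. sum_list (map2 (*) row v)) W"

definition relu_vec :: "real list \<Rightarrow> real list" where
  "relu_vec v = map relu v"

fun net_eval :: "bool \<Rightarrow> real list list list \<Rightarrow> real list \<Rightarrow> real list" where
  "net_eval b [] v = v"
| "net_eval b [W] v = (if b then relu_vec (mat_vec W v) else mat_vec W v)"
| "net_eval b (W # W' # Ws) v = net_eval b (W' # Ws) (relu_vec (mat_vec W v))"

definition univariate_net :: "nat list \<Rightarrow> real list list list \<Rightarrow> bool" where
  "univariate_net ds Ws \<longleftrightarrow>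
     Ws \<noteq> [] \<and> length ds = Suc (length Ws) \<and>
     hd ds = 1 \<and> last ds = 1 \<and> (\<forall>d\<in>set ds. d \<ge> 1) \<and>
     (\<forall>i < length Ws. length (Ws ! i) = ds ! Suc i \<and>
                       (\<forall>row \<in> set (Ws ! i). length row = ds ! i))"

definition net_fun :: "bool \<Rightarrow> real list list list \<Rightarrow> real \<Rightarrow> real" where
  "net_fun b Ws x = hd (net_eval b Ws [x])"

end

theory Submission
  imports Defs
begin

lemma relu_scale: "t \<ge> 0 \<Longrightarrow> relu (t * y) = t * relu y"
  unfolding relu_def by (auto simp: max_def mult_le_0_iff intro: mult_left_mono)

lemma sum_map2_scale: "sum_list (map2 (*) rw (map ((*) t) v)) = t * sum_list (map2 (*) (rw::real list) v)"
proof (induction rw arbitrary: v)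
  case Nil then show ?case by simp
next
  case (Cons r rw) then show ?case by (cases v) (auto simp: algebra_simps)
qed

lemma mat_vec_scale: "mat_vec W (map ((*) t) v) = map ((*) t) (mat_vec W v)"
  unfolding mat_vec_def using sum_map2_scale by simp

lemma relu_vec_scale: "t \<ge> 0 \<Longrightarrow> relu_vec (map ((*) t) v) = map ((*) t) (relu_vec v)"
  unfolding relu_vec_def using relu_scale by simp

lemma net_scale: "t \<ge> 0 \<Longrightarrow> net_eval b Ws (map ((*) t) v) = map ((*) t) (net_eval b Ws v)"
  by (induction b Ws v rule: net_eval.induct) (auto simp: mat_vec_scale relu_vec_scale)

lemma net_len: "Ws \<noteq> [] \<Longrightarrow> length (net_eval b Ws v) = length (last Ws)"
  by (induction b Ws v rule: net_eval.induct) (auto simp: mat_vec_def relu_vec_def)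

lemma net_hom:
  assumes "length (last Ws) = 1" "Ws \<noteq> []" "t \<ge> 0"
  shows "net_fun b Ws (t * x) = t * net_fun b Ws x"
proof -
  have "net_eval b Ws [t*x] = map ((*) t) (net_eval b Ws [x])"
    using net_scale[OF assms(3), of b Ws "[x]"] by simp
  moreover have "net_eval b Ws [x] \<noteq> []" using net_len[OF assms(2)] assms(1)
    by (metis list.size(3) zero_neq_one)
  ultimately show ?thesis unfolding net_fun_def by (cases "net_eval b Ws [x]") auto
qed

lemma int_pos: "((\<lambda>x::real. (1/2 - a*x)^2) has_integral (1/4 - a/2 + a^2/3)) {0..1}"
proof -
  have "((\<lambda>x::real. (1/2 - a*x)^2) has_integral
     ((\<lambda>x. x/4 - a*x^2/2 + a^2*x^3/3) 1 - (\<lambda>x. x/4 - a*x^2/2 + a^2*x^3/3) 0)) {0..1}"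
    apply (rule fundamental_theorem_of_calculus)
     apply simp
    apply (subst has_real_derivative_iff_has_vector_derivative[symmetric])
    apply (auto intro!: derivative_eq_intros simp: power2_eq_square algebra_simps)
    done
  then show ?thesis by simp
qed

lemma int_neg: "((\<lambda>x::real. (1/2 + c*x)^2) has_integral (1/4 - c/2 + c^2/3)) {-1..0}"
proof -
  have "((\<lambda>x::real. (1/2 + c*x)^2) has_integral
     ((\<lambda>x. x/4 + c*x^2/2 + c^2*x^3/3) 0 - (\<lambda>x. x/4 + c*x^2/2 + c^2*x^3/3) (-1))) {-1..0}"
    apply (rule fundamental_theorem_of_calculus)
     apply simp
    apply (subst has_real_derivative_iff_has_vector_derivative[symmetric])
    apply (auto intro!: derivative_eq_intros simp: power2_eq_square algebra_simps)
    done
  then show ?thesis by (simp add: algebra_simps)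
qed

theorem mainTheorem2:
  fixes ds :: "nat list" and Ws :: "real list list list" and out_relu :: bool
    and g :: "real \<Rightarrow> real"
  assumes g_def: "\<And>x. g x = 1/2"
    and net: "univariate_net ds Ws"
  shows "integral {-1..1} (\<lambda>x. (g x - net_fun out_relu Ws x)^2) \<ge> 1/8"
proof -
  have ne: "Ws \<noteq> []" using net unfolding univariate_net_def by simp
  have "length (last Ws) = 1"
  proof -
    from net have L: "length ds = Suc (length Ws)" "last ds = 1"
      and W: "\<forall>i < length Ws. length (Ws ! i) = ds ! Suc i"
      unfolding univariate_net_def by auto
    have "last Ws = Ws ! (length Ws - 1)" using ne by (simp add: last_conv_nth)
    moreover have "length (Ws ! (length Ws - 1)) = ds ! Suc (length Ws - 1)"
      using W ne by simp
    moreover have "ds ! Suc (length Ws - 1) = last ds"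
      using L ne by (metis Suc_pred' diff_Suc_1 last_conv_nth length_greater_0_conv list.size(3) nat.simps(3))
    ultimately show ?thesis using L by simp
  qed
  note H = net_hom[OF this ne]
  define f where "f = net_fun out_relu Ws"
  define a where "a = f 1"
  define c where "c = f (-1)"
  have fp: "f x = a * x" if "x \<ge> 0" for x
    using H[OF that, of out_relu 1] unfolding f_def a_def by simp
  have fn: "f x = - c * x" if "x \<le> 0" for x
    using H[of "-x" out_relu "-1"] that unfolding f_def c_def by simp
  have I1: "((\<lambda>x. (g x - f x)^2) has_integral (1/4 - a/2 + a^2/3)) {0..1}"
    by (rule has_integral_eq[OF _ int_pos]) (simp add: g_def fp)
  have I2: "((\<lambda>x. (g x - f x)^2) has_integral (1/4 - c/2 + c^2/3)) {-1..0}"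
    by (rule has_integral_eq[OF _ int_neg]) (simp add: g_def fn)
  have "((\<lambda>x. (g x - f x)^2) has_integral ((1/4 - c/2 + c^2/3) + (1/4 - a/2 + a^2/3))) {-1..1}"
    by (rule has_integral_combine[OF _ _ I2 I1]) auto
  then have "integral {-1..1} (\<lambda>x. (g x - f x)^2) = (1/4 - c/2 + c^2/3) + (1/4 - a/2 + a^2/3)"
    by (rule integral_unique)
  moreover have "(1/4 - c/2 + c^2/3) + (1/4 - a/2 + a^2/3) \<ge> (1/8::real)"
    using sum_squares_ge_zero[of "a - 3/4" "c - 3/4"]
    by (simp add: power2_eq_square algebra_simps)
  ultimately show ?thesis unfolding f_def by simp
qed

end
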